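(* Let $f:\mathbb{R}^d\to\mathbb{R}$ be $\beta$-smooth with minimum value $f^\star$. Then the iterates of AdaSGD (as in the context) satisfy $$\sum_{t=1}^T\nabla f(w_t)\cdot g_t\le\frac{\gamma\Delta_1}{\eta}+\Big(\frac{2\bar\Delta_T}{\eta}+\eta\beta\Big)\sqrt{\sum_{t=1}^T\|g_t\|^2},$$ where $\Delta_1=f(w_1)-f^\star$ and $\bar\Delta_T=\max_{t\le T}f(w_t)-f^\star$.
   Context: $\|\cdot\|$ is the Euclidean norm. $\beta$-smooth: $\|\nabla f(x)-\nabla f(y)\|\le\beta\|x-y\|$. AdaSGD with parameters $\eta,\gamma>0$: arbitrary $w_1\in\mathbb{R}^d$; for $t=1,\dots,T$, $g_t$ is the stochastic gradient returned by an oracle at $w_t$, $\eta_t=\eta/\sqrt{\gamma^2+\sum_{s=1}^t\|g_s\|^2}$, and $w_{t+1}=w_t-\eta_tg_t$. *)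

theory Defs
  imports "HOL-Analysis.Analysis"
begin

definition adasgd_step :: "real \<Rightarrow> real \<Rightarrow> (nat \<Rightarrow> 'a::real_normed_vector) \<Rightarrow> nat \<Rightarrow> real" where
  "adasgd_step \<eta> \<gamma> g t = \<eta> / sqrt (\<gamma>\<^sup>2 + (\<Sum>s=1..t. (norm (g s))\<^sup>2))"

definition adasgd_iterates :: "real \<Rightarrow> real \<Rightarrow> (nat \<Rightarrow> 'a::real_normed_vector) \<Rightarrow> (nat \<Rightarrow> 'a) \<Rightarrow> nat \<Rightarrow> bool" where
  "adasgd_iterates \<eta> \<gamma> g w T \<longleftrightarrow> (\<forall>t\<in>{1..T}. w (t+1) = w t - adasgd_step \<eta> \<gamma> g t *\<^sub>R g t)"

end

theory Submission
  imports Defs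
begin

lemma descent:
  fixes f :: "'a::euclidean_space \<Rightarrow> real" and df :: "'a \<Rightarrow> 'a"
  assumes grad: "\<And>x. (f has_derivative (\<lambda>h. df x \<bullet> h)) (at x)"
    and smooth: "\<And>x y. norm (df x - df y) \<le> \<beta> * norm (x - y)"
  shows "f y \<le> f x + df x \<bullet> (y - x) + \<beta>/2 * (norm (y-x))\<^sup>2"
proof -
  define v where "v = y - x"
  define \<phi> where "\<phi> s = f (x + s *\<^sub>R v) - s * (df x \<bullet> v) - \<beta>/2 * s\<^sup>2 * (norm v)\<^sup>2" for s
  have d: "(\<phi> has_real_derivative (df (x + s *\<^sub>R v) \<bullet> v - df x \<bullet> v - \<beta> * s * (norm v)\<^sup>2)) (at s)" for s
  proof -
    have l: "((\<lambda>s. x + s *\<^sub>R v) has_derivative (\<lambda>h. h *\<^sub>R v)) (at s)"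
      by (auto intro!: derivative_eq_intros)
    have c: "((\<lambda>s. f (x + s *\<^sub>R v)) has_derivative (\<lambda>h. df (x + s *\<^sub>R v) \<bullet> (h *\<^sub>R v))) (at s)"
      using has_derivative_compose[OF l grad] by simp
    have c': "((\<lambda>s. f (x + s *\<^sub>R v)) has_real_derivative (df (x + s *\<^sub>R v) \<bullet> v)) (at s)"
      unfolding has_field_derivative_def using c by (simp add: mult.commute[of _ "df (x + s *\<^sub>R v) \<bullet> v"])
    show ?thesis unfolding \<phi>_def
      by (rule derivative_eq_intros c' refl | simp)+
  qed
  have nonpos: "df (x + s *\<^sub>R v) \<bullet> v - df x \<bullet> v - \<beta> * s * (norm v)\<^sup>2 \<le> 0" if "0 \<le> s" for s
  proof -
    have "df (x + s *\<^sub>R v) \<bullet> v - df x \<bullet> v = (df (x + s *\<^sub>R v) - df x) \<bullet> v" by (simp add: inner_diff_left)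
    also have "\<dots> \<le> norm (df (x + s *\<^sub>R v) - df x) * norm v" by (rule norm_cauchy_schwarz)
    also have "\<dots> \<le> \<beta> * norm (s *\<^sub>R v) * norm v"
      using smooth[of "x + s *\<^sub>R v" x] by (simp add: mult_right_mono)
    also have "\<dots> = \<beta> * s * (norm v)\<^sup>2" using that by (simp add: power2_eq_square)
    finally show ?thesis by simp
  qed
  have "\<phi> 1 \<le> \<phi> 0"
    by (rule DERIV_nonpos_imp_nonincreasing[of 0 1]) (use d nonpos in \<open>auto intro!: exI\<close>)
  then show ?thesis unfolding \<phi>_def v_def by (simp add: inner_diff_right)
qed

lemma abel_bound:
  fixes D r :: "nat \<Rightarrow> real"
  assumes "\<And>t. 1 \<le> t \<Longrightarrow> t \<le> Suc n \<Longrightarrow> D t \<le> M" and mono: "\<And>t. r t \<le> r (Suc t)"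
  shows "(\<Sum>t=1..Suc n. (D t - D (t+1)) * r t) \<le> D 1 * r 1 + M * (r (Suc n) - r 1) - D (Suc n + 1) * r (Suc n)"
  using assms(1)
proof (induction n)
  case 0
  then show ?case by (simp add: algebra_simps)
next
  case (Suc n)
  have IH: "(\<Sum>t=1..Suc n. (D t - D (t+1)) * r t) \<le> D 1 * r 1 + M * (r (Suc n) - r 1) - D (Suc n + 1) * r (Suc n)"
    using Suc by simp
  have le: "D (Suc (Suc n)) \<le> M" using Suc.prems by simp
  have "D (Suc (Suc n)) * (r (Suc (Suc n)) - r (Suc n)) \<le> M * (r (Suc (Suc n)) - r (Suc n))"
    using le mono[of "Suc n"] by (simp add: mult_right_mono)
  then show ?case using IH by (simp add: algebra_simps)
qed

lemma sq_sum_bound: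
  fixes a :: "nat \<Rightarrow> real" and \<gamma> :: real
  assumes "\<gamma> > 0" and "\<And>t. a t \<ge> 0"
  shows "(\<Sum>t=1..n. a t / sqrt (\<gamma>\<^sup>2 + (\<Sum>s=1..t. a s))) \<le> 2 * (sqrt (\<gamma>\<^sup>2 + (\<Sum>s=1..n. a s)) - \<gamma>)"
proof (induction n)
  case 0
  then show ?case using assms by simp
next
  case (Suc n)
  define G where "G = \<gamma>\<^sup>2 + (\<Sum>s=1..n. a s)"
  define b where "b = a (Suc n)"
  have G0: "G > 0" unfolding G_def using assms by (simp add: sum_nonneg add_pos_nonneg)
  have b0: "b \<ge> 0" unfolding b_def using assms by simp
  have eq: "\<gamma>\<^sup>2 + (\<Sum>s=1..Suc n. a s) = G + b" unfolding G_def b_def by simp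
  have key: "b / sqrt (G + b) \<le> 2 * (sqrt (G + b) - sqrt G)"
  proof -
    have p: "sqrt (G + b) > 0" using G0 b0 by simp
    have m: "sqrt G \<le> sqrt (G + b)" using b0 by simp
    have "b = (sqrt (G + b) - sqrt G) * (sqrt (G + b) + sqrt G)"
      using G0 b0 by (simp add: algebra_simps)
    also have "\<dots> \<le> (sqrt (G + b) - sqrt G) * (2 * sqrt (G + b))"
      using m by (intro mult_left_mono) auto
    finally have "b \<le> 2 * (sqrt (G + b) - sqrt G) * sqrt (G + b)" by (simp add: algebra_simps)
    then show ?thesis using p by (simp add: divide_le_eq)
  qed
  have "(\<Sum>t=1..Suc n. a t / sqrt (\<gamma>\<^sup>2 + (\<Sum>s=1..t. a s)))
      = (\<Sum>t=1..n. a t / sqrt (\<gamma>\<^sup>2 + (\<Sum>s=1..t. a s))) + b / sqrt (G + b)"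
    using eq by (simp add: b_def)
  also have "\<dots> \<le> 2 * (sqrt G - \<gamma>) + 2 * (sqrt (G + b) - sqrt G)"
    using Suc.IH key unfolding G_def by linarith
  finally show ?case using eq by simp
qed

theorem lemma1:
  fixes f :: "'a::euclidean_space \<Rightarrow> real" and df :: "'a \<Rightarrow> 'a"
    and \<beta> \<eta> \<gamma> fstar :: real and g w :: "nat \<Rightarrow> 'a" and T :: nat
  assumes grad: "\<And>x. (f has_derivative (\<lambda>h. df x \<bullet> h)) (at x)"
    and smooth: "\<And>x y. norm (df x - df y) \<le> \<beta> * norm (x - y)"
    and fmin: "\<And>x. fstar \<le> f x" and fstar_att: "\<exists>x. f x = fstar"
    and eta_pos: "\<eta> > 0" and gamma_pos: "\<gamma> > 0"
    and iter: "adasgd_iterates \<eta> \<gamma> g w T"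
  shows "(\<Sum>t=1..T. df (w t) \<bullet> g t)
    \<le> \<gamma> * (f (w 1) - fstar) / \<eta>
      + (2 * ((MAX t\<in>{1..T}. f (w t)) - fstar) / \<eta> + \<eta> * \<beta>) * sqrt (\<Sum>t=1..T. (norm (g t))\<^sup>2)"
proof (cases "T = 0")
  case True
  then show ?thesis using fmin[of "w 1"] eta_pos gamma_pos by simp
next
  case False
  then obtain n where Tn: "T = Suc n" by (cases T) auto
  define a where "a t = (norm (g t))\<^sup>2" for t
  define r where "r t = sqrt (\<gamma>\<^sup>2 + (\<Sum>s=1..t. a s))" for t
  define D where "D t = f (w t) - fstar" for t
  define M where "M = (MAX t\<in>{1..T}. f (w t)) - fstar"
  define S where "S = (\<Sum>t=1..T. a t)"
  have a0: "\<And>t. a t \<ge> 0" unfolding a_def by simp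
  have rpos: "r t > 0" for t unfolding r_def using gamma_pos a0
    by (simp add: sum_nonneg add_pos_nonneg)
  have rmono: "r t \<le> r (Suc t)" for t unfolding r_def using a0 by simp
  have r0: "r 0 = \<gamma>" unfolding r_def using gamma_pos by simp
  have r1: "\<gamma> \<le> r 1" using rmono[of 0] r0 by simp
  have rT: "r T - \<gamma> \<le> sqrt S"
  proof -
    have "r T \<le> sqrt (\<gamma>\<^sup>2) + sqrt S" unfolding r_def S_def by (rule sqrt_add_le_add_sqrt) (use a0 in \<open>auto intro: sum_nonneg\<close>)
    then show ?thesis using gamma_pos by simp
  qed
  have beta0: "\<beta> \<ge> 0"
  proof -
    obtain b :: 'a where "b \<in> Basis" using nonempty_Basis by blast
    then have "norm b = 1" by simp
    moreover have "norm (df b - df 0) \<le> \<beta> * norm (b - 0)" by (rule smooth)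
    ultimately show ?thesis using norm_ge_zero[of "df b - df 0"] by (metis diff_zero mult.right_neutral order.trans)
  qed
  have DM: "D t \<le> M" if "1 \<le> t" "t \<le> T" for t
    unfolding D_def M_def using that by (intro diff_right_mono Max_ge) auto
  have D0: "D t \<ge> 0" for t unfolding D_def using fmin by simp
  have step: "df (w t) \<bullet> g t \<le> (D t - D (t+1)) * r t / \<eta> + \<beta> / 2 * \<eta> * (a t / r t)"
    if "t \<in> {1..T}" for t
  proof -
    define c where "c = \<eta> / r t"
    have c0: "c > 0" unfolding c_def using eta_pos rpos by simp
    have wt: "w (t+1) = w t - c *\<^sub>R g t"
      using iter that unfolding adasgd_iterates_def adasgd_step_def c_def r_def a_def by simp
    have "f (w (t+1)) \<le> f (w t) + df (w t) \<bullet> (w (t+1) - w t) + \<beta>/2 * (norm (w (t+1) - w t))\<^sup>2"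
      by (rule descent[OF grad smooth])
    also have "\<dots> = f (w t) - c * (df (w t) \<bullet> g t) + \<beta>/2 * c\<^sup>2 * a t"
      using c0 unfolding wt a_def by (simp add: power_mult_distrib)
    finally have "c * (df (w t) \<bullet> g t) \<le> (D t - D (t+1)) + c * (\<beta>/2 * c * a t)"
      unfolding D_def by (simp add: power2_eq_square algebra_simps)
    then have "df (w t) \<bullet> g t \<le> (D t - D (t+1)) / c + \<beta>/2 * c * a t"
      using c0 by (simp add: field_simps)
    then show ?thesis unfolding c_def using eta_pos rpos[of t] by (simp add: field_simps)
  qed
  have "(\<Sum>t=1..T. df (w t) \<bullet> g t) \<le> (\<Sum>t=1..T. (D t - D (t+1)) * r t / \<eta> + \<beta> / 2 * \<eta> * (a t / r t))"
    by (rule sum_mono) (rule step)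
  also have "\<dots> = (\<Sum>t=1..T. (D t - D (t+1)) * r t) / \<eta> + \<beta> / 2 * \<eta> * (\<Sum>t=1..T. a t / r t)"
    by (simp add: sum.distrib sum_divide_distrib sum_distrib_left)
  also have "\<dots> \<le> (D 1 * r 1 + M * (r T - r 1) - D (T + 1) * r T) / \<eta> + \<beta> / 2 * \<eta> * (2 * (r T - \<gamma>))"
  proof (rule add_mono)
    show "(\<Sum>t=1..T. (D t - D (t+1)) * r t) / \<eta> \<le> (D 1 * r 1 + M * (r T - r 1) - D (T + 1) * r T) / \<eta>"
      using abel_bound[of n D M r] DM rmono eta_pos unfolding Tn by (simp add: divide_right_mono)
    have "(\<Sum>t=1..T. a t / r t) \<le> 2 * (r T - \<gamma>)"
      unfolding r_def using sq_sum_bound[OF gamma_pos a0] .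
    then show "\<beta> / 2 * \<eta> * (\<Sum>t=1..T. a t / r t) \<le> \<beta> / 2 * \<eta> * (2 * (r T - \<gamma>))"
      using beta0 eta_pos by (intro mult_left_mono) auto
  qed
  also have "\<dots> \<le> \<gamma> * D 1 / \<eta> + (2 * M / \<eta> + \<eta> * \<beta>) * sqrt S"
  proof -
    have M0: "D 1 \<le> M" using DM Tn by simp
    have A: "D 1 * r 1 - M * r 1 \<le> D 1 * \<gamma> - M * \<gamma>"
    proof -
      have "(M - D 1) * \<gamma> \<le> (M - D 1) * r 1" using M0 r1 by (intro mult_left_mono) auto
      then show ?thesis by (simp add: algebra_simps)
    qed
    have B: "M * (r T - \<gamma>) \<le> M * sqrt S" using rT M0 D0[of 1] by (intro mult_left_mono) auto
    have C: "D (T+1) * r T \<ge> 0" using D0 rpos[of T] by simp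
    have E: "\<beta> * \<eta> * (r T - \<gamma>) \<le> \<beta> * \<eta> * sqrt S" using rT beta0 eta_pos by (intro mult_left_mono) auto
    have S0: "S \<ge> 0" unfolding S_def using a0 by (auto intro: sum_nonneg)
    have F: "M * sqrt S \<ge> 0" using M0 D0[of 1] S0 by simp
    have "D 1 * r 1 + M * (r T - r 1) - D (T + 1) * r T \<le> \<gamma> * D 1 + 2 * M * sqrt S"
      using A B C F by (simp add: algebra_simps)
    then have "(D 1 * r 1 + M * (r T - r 1) - D (T + 1) * r T) / \<eta> \<le> (\<gamma> * D 1 + 2 * M * sqrt S) / \<eta>"
      using eta_pos by (simp add: divide_right_mono)
    moreover have "\<beta> / 2 * \<eta> * (2 * (r T - \<gamma>)) \<le> \<eta> * \<beta> * sqrt S" using E by (simp add: algebra_simps)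
    ultimately show ?thesis by (simp add: add_divide_distrib algebra_simps)
  qed
  finally show ?thesis unfolding D_def M_def S_def a_def .
qed

end
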